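(* The system of equations below implies the following Kelvin theorem for the fluid circulation: $$\frac{d}{dt}\oint_{c(\widehat{\mathbf{v}})}\widehat{\mathbf{v}}\cdot d\mathbf{r}=\epsilon\sigma^4\oint_{c(\widehat{\mathbf{v}})}\frac{1}{D}\mathrm{div}_{\mathbf{r}}\big(D\widehat{w}^2\nabla\zeta\big)\,d\zeta+|\nabla_{\mathbf{r}}\zeta|^2\,d\widehat{w}^2/2,$$ in which $c(\widehat{\mathbf{v}})$ is a closed loop moving with the material velocity $\widehat{\mathbf{v}}$.
   Context: On a free surface $z=\zeta(\mathbf{r},t)$ over horizontal coordinates $\mathbf{r}=(x,y)$, consider the fields: horizontal transport velocity $\widehat{\mathbf{v}}$, vertical velocity $\widehat{w}$, areal density $D$, surface velocity potential $\widehat{\phi}$, elevation $\zeta$ and wave momentum density $\lambda$; $\sigma$ is the aspect ratio, $Fr$ the Froude number and $0\le\epsilon\le1$ a constant. Stationarity of the action $S=\int\int D\big(\tfrac12(|\widehat{\mathbf{v}}|^2+\sigma^2\widehat{w}^2+\epsilon\sigma^4|\widehat{w}\nabla_{\mathbf{r}}\zeta|^2)-\zeta/Fr^2\big)+\sigma^2\lambda(\partial_t\zeta+\widehat{\mathbf{v}}\cdot\nabla_{\mathbf{r}}\zeta-\widehat{w})+\widehat{\phi}(\partial_tD+\mathrm{div}_{\mathbf{r}}(D\widehat{\mathbf{v}}))\,d^2r\,dt$ yields: $\mathbf{V}\cdot d\mathbf{r}:=\widehat{\mathbf{v}}\cdot d\mathbf{r}+\sigma^2(\lambda/D)\,d\zeta=d\widehat{\phi}$;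 $\lambda/D=\widehat{w}(1+\epsilon\sigma^2|\nabla_{\mathbf{r}}\zeta|^2)$; $\partial_t\zeta+\widehat{\mathbf{v}}\cdot\nabla_{\mathbf{r}}\zeta-\widehat{w}=0$; $\partial_t\lambda+\mathrm{div}_{\mathbf{r}}(\lambda\widehat{\mathbf{v}})=-D/(\sigma^2Fr^2)-\mathrm{div}_{\mathbf{r}}(\epsilon\sigma^2D\widehat{w}^2\nabla_{\mathbf{r}}\zeta)$; $\partial_tD+\mathrm{div}_{\mathbf{r}}(D\widehat{\mathbf{v}})=0$; $(\partial_t+\widehat{\mathbf{v}}\cdot\nabla_{\mathbf{r}})\widehat{\phi}=\tfrac12\big(|\widehat{\mathbf{v}}|^2+\sigma^2\widehat{w}^2(1+\epsilon\sigma^2|\nabla_{\mathbf{r}}\zeta|^2)\big)-\zeta/Fr^2$. *)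

theory Defs
  imports "HOL-Analysis.Analysis"
begin

text \<open>Horizontal coordinates r = (x,y) are modelled as real \<times> real; a scalar field is
  a function f :: real \<times> real \<Rightarrow> real \<Rightarrow> real (position, time), a horizontal vector
  field is u :: real \<times> real \<Rightarrow> real \<Rightarrow> real \<times> real.\<close>

definition C1 :: "('a::real_normed_vector \<Rightarrow> 'b::real_normed_vector) \<Rightarrow> bool" where
  "C1 f \<longleftrightarrow> (\<exists>f'. (\<forall>x. (f has_derivative blinfun_apply (f' x)) (at x)) \<and> continuous_on UNIV f')"

definition C2 :: "('a::real_normed_vector \<Rightarrow> 'b::real_normed_vector) \<Rightarrow> bool" where
  "C2 f \<longleftrightarrow> (\<exists>f'. (\<forall>x. (f has_derivative blinfun_apply (f' x)) (at x)) \<and> C1 f')"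

definition pdx :: "(real \<times> real \<Rightarrow> real \<Rightarrow> real) \<Rightarrow> real \<times> real \<Rightarrow> real \<Rightarrow> real" where
  "pdx f r t = deriv (\<lambda>x. f (x, snd r) t) (fst r)"

definition pdy :: "(real \<times> real \<Rightarrow> real \<Rightarrow> real) \<Rightarrow> real \<times> real \<Rightarrow> real \<Rightarrow> real" where
  "pdy f r t = deriv (\<lambda>y. f (fst r, y) t) (snd r)"

definition pdt :: "(real \<times> real \<Rightarrow> real \<Rightarrow> real) \<Rightarrow> real \<times> real \<Rightarrow> real \<Rightarrow> real" where
  "pdt f r t = deriv (\<lambda>s. f r s) t"

definition grad :: "(real \<times> real \<Rightarrow> real \<Rightarrow> real) \<Rightarrow> real \<times> real \<Rightarrow> real \<Rightarrow> real \<times> real" where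
  "grad f r t = (pdx f r t, pdy f r t)"

definition hdiv :: "(real \<times> real \<Rightarrow> real \<Rightarrow> real \<times> real) \<Rightarrow> real \<times> real \<Rightarrow> real \<Rightarrow> real" where
  "hdiv u r t = pdx (\<lambda>r t. fst (u r t)) r t + pdy (\<lambda>r t. snd (u r t)) r t"

definition circulation :: "(real \<times> real \<Rightarrow> real \<Rightarrow> real \<times> real) \<Rightarrow> (real \<Rightarrow> real \<Rightarrow> real \<times> real) \<Rightarrow> real \<Rightarrow> real" where
  "circulation u c t = integral {0..1} (\<lambda>s. inner (u (c s t) t) (vector_derivative (\<lambda>s. c s t) (at s)))"

end

theory Submission
  imports Defs
begin


lemma lin3:
  fixes Df :: "(real \<times> real) \<times> real \<Rightarrow> 'b::real_normed_vector"
  assumes "bounded_linear Df"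
  shows "Df ((a,b),k) = a *\<^sub>R Df ((1,0),0) + b *\<^sub>R Df ((0,1),0) + k *\<^sub>R Df ((0,0),1)"
proof -
  have "((a,b),k) = a *\<^sub>R ((1,0),0) + b *\<^sub>R ((0,1),0) + k *\<^sub>R ((0::real,0::real),1::real)" by simp
  then have "Df ((a,b),k) = Df (a *\<^sub>R ((1,0),0) + b *\<^sub>R ((0,1),0) + k *\<^sub>R ((0,0),1))" by metis
  also have "\<dots> = a *\<^sub>R Df ((1,0),0) + b *\<^sub>R Df ((0,1),0) + k *\<^sub>R Df ((0,0),1)" by (simp only: linear_simps[OF assms])
  finally show ?thesis .
qed

lemma lin_e:
  fixes Df :: "(real \<times> real) \<times> real \<Rightarrow> 'b::real_normed_vector"
  assumes "bounded_linear Df"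
  shows "Df ((x,0),0) = x *\<^sub>R Df ((1,0),0)" "Df ((0,x),0) = x *\<^sub>R Df ((0,1),0)"
    "Df ((0,0),x) = x *\<^sub>R Df ((0,0),1)"
proof -
  have "((x,0),0) = x *\<^sub>R ((1::real,0::real),0::real)" "((0,x),0) = x *\<^sub>R ((0::real,1::real),0::real)"
    "((0,0),x) = x *\<^sub>R ((0::real,0::real),1::real)" by simp_all
  then show "Df ((x,0),0) = x *\<^sub>R Df ((1,0),0)" "Df ((0,x),0) = x *\<^sub>R Df ((0,1),0)"
    "Df ((0,0),x) = x *\<^sub>R Df ((0,0),1)" by (metis linear_simps(5)[OF assms])+
qed

lemma pd_frechet:
  fixes f :: "real \<times> real \<Rightarrow> real \<Rightarrow> real"
  assumes d: "((\<lambda>(r,t). f r t) has_derivative Df) (at (r,t))"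
  shows "pdx f r t = Df ((1,0),0)" "pdy f r t = Df ((0,1),0)" "pdt f r t = Df ((0,0),1)"
    "((\<lambda>x. f (x, snd r) t) has_real_derivative Df ((1,0),0)) (at (fst r))"
    "((\<lambda>y. f (fst r, y) t) has_real_derivative Df ((0,1),0)) (at (snd r))"
    "((\<lambda>s. f r s) has_real_derivative Df ((0,0),1)) (at t)"
proof -
  have bl: "bounded_linear Df" using d has_derivative_bounded_linear by blast
  have "((\<lambda>x. ((x, snd r), t)) has_derivative (\<lambda>h. ((h,0),0))) (at (fst r))"
    by (auto intro!: derivative_eq_intros)
  from has_derivative_compose[OF this, of "\<lambda>(r,t). f r t" Df] d
  have "((\<lambda>x. f (x, snd r) t) has_derivative (\<lambda>h. Df ((h,0),0))) (at (fst r))" by (simp only: prod.case prod.collapse)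
  then show X: "((\<lambda>x. f (x, snd r) t) has_real_derivative Df ((1,0),0)) (at (fst r))"
    by (rule has_derivative_imp_has_field_derivative) (metis lin_e(1)[OF bl] real_scaleR_def)
  then show "pdx f r t = Df ((1,0),0)" unfolding pdx_def by (rule DERIV_imp_deriv)
  have "((\<lambda>x. ((fst r, x), t)) has_derivative (\<lambda>h. ((0,h),0))) (at (snd r))"
    by (auto intro!: derivative_eq_intros)
  from has_derivative_compose[OF this, of "\<lambda>(r,t). f r t" Df] d
  have "((\<lambda>x. f (fst r, x) t) has_derivative (\<lambda>h. Df ((0,h),0))) (at (snd r))" by (simp only: prod.case prod.collapse)
  then show Y: "((\<lambda>y. f (fst r, y) t) has_real_derivative Df ((0,1),0)) (at (snd r))"
    by (rule has_derivative_imp_has_field_derivative) (metis lin_e(2)[OF bl] real_scaleR_def)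
  then show "pdy f r t = Df ((0,1),0)" unfolding pdy_def by (rule DERIV_imp_deriv)
  have "((\<lambda>x. (r, x)) has_derivative (\<lambda>h. ((0,0),h))) (at t)"
    by (auto intro!: derivative_eq_intros simp: zero_prod_def)
  from has_derivative_compose[OF this, of "\<lambda>(r,t). f r t" Df] d
  have "((\<lambda>x. f r x) has_derivative (\<lambda>h. Df ((0,0),h))) (at t)" by (simp only: prod.case prod.collapse)
  then show T: "((\<lambda>s. f r s) has_real_derivative Df ((0,0),1)) (at t)"
    by (rule has_derivative_imp_has_field_derivative) (metis lin_e(3)[OF bl] real_scaleR_def)
  then show "pdt f r t = Df ((0,0),1)" unfolding pdt_def by (rule DERIV_imp_deriv)
qed

lemma frechet_grad:
  fixes f :: "real \<times> real \<Rightarrow> real \<Rightarrow> real"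
  assumes d: "((\<lambda>(r,t). f r t) has_derivative Df) (at (r,t))"
  shows "Df (h,k) = inner h (grad f r t) + k * pdt f r t"
proof -
  have bl: "bounded_linear Df" using d has_derivative_bounded_linear by blast
  obtain a b where h: "h = (a,b)" by fastforce
  show ?thesis using pd_frechet(1,2,3)[OF d] lin3[OF bl, of a b k] unfolding h grad_def by simp
qed



lemma ftc_at:
  fixes f f' :: "real \<Rightarrow> real"
  assumes "a \<le> b" "\<And>x. (f has_real_derivative f' x) (at x)"
  shows "(f' has_integral (f b - f a)) {a..b}"
  by (rule fundamental_theorem_of_calculus[OF assms(1)])
     (simp add: has_real_derivative_iff_has_vector_derivative[symmetric] has_field_derivative_at_within assms(2))

lemma mixed_sym:
  fixes g gs gt gts gst :: "real \<Rightarrow> real \<Rightarrow> real"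
  assumes gs: "\<And>s t. ((\<lambda>s. g s t) has_real_derivative gs s t) (at s)"
  and gt: "\<And>s t. ((\<lambda>t. g s t) has_real_derivative gt s t) (at t)"
  and gts: "\<And>s t. ((\<lambda>t. gs s t) has_real_derivative gts s t) (at t)"
  and gst: "\<And>s t. ((\<lambda>s. gt s t) has_real_derivative gst s t) (at s)"
  and cont: "continuous_on UNIV (\<lambda>(t,s). gts s t)"
  shows "gts s0 t0 = gst s0 t0"
proof -
  define a where "a = s0 - 1"
  define b where "b = s0 + 1"
  have K: "integral {a..u} (\<lambda>s. gts s t0) = gt u t0 - gt a t0" if u: "u \<in> {a..b}" for u
  proof -
    have au: "a \<le> u" using u by simp
    have I: "((\<lambda>s. gs s t) has_integral (g u t - g a t)) {a..u}" for t
      by (rule ftc_at[OF au gs])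
    have L: "((\<lambda>t. integral (cbox a u) (\<lambda>s. gs s t)) has_real_derivative integral (cbox a u) (\<lambda>s. gts s t0)) (at t0 within UNIV)"
    proof (rule leibniz_rule_field_derivative[where f="\<lambda>t s. gs s t" and fx="\<lambda>t s. gts s t"])
      show "\<And>x t. x \<in> UNIV \<Longrightarrow> t \<in> cbox a u \<Longrightarrow> ((\<lambda>x. gs t x) has_real_derivative gts t x) (at x within UNIV)"
        using gts by simp
      show "\<And>x. x \<in> UNIV \<Longrightarrow> (\<lambda>s. gs s x) integrable_on cbox a u"
        using I by (auto simp: cbox_interval)
      show "continuous_on (UNIV \<times> cbox a u) (\<lambda>(x, t). gts t x)"
        using cont by (rule continuous_on_subset) simp
    qed auto
    have "(\<lambda>t. integral (cbox a u) (\<lambda>s. gs s t)) = (\<lambda>t. g u t - g a t)"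
      using I by (auto simp: cbox_interval intro!: integral_unique)
    then have L2: "((\<lambda>t. g u t - g a t) has_real_derivative integral {a..u} (\<lambda>s. gts s t0)) (at t0)"
      using L by (simp add: cbox_interval)
    have L3: "((\<lambda>t. g u t - g a t) has_real_derivative gt u t0 - gt a t0) (at t0)"
      by (intro DERIV_diff gt)
    show ?thesis using DERIV_unique[OF L2 L3] .
  qed
  have cs: "continuous_on {a..b} (\<lambda>s. gts s t0)"
  proof -
    have "continuous_on UNIV ((\<lambda>(t,s). gts s t) \<circ> (\<lambda>s. (t0, s)))"
      by (rule continuous_on_compose) (auto intro!: continuous_intros intro: continuous_on_subset[OF cont])
    then show ?thesis by (simp add: o_def) (meson continuous_on_subset subset_UNIV)
  qed
  have int: "s0 \<in> interior {a..b}" by (simp add: a_def b_def)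
  have D1: "((\<lambda>u. integral {a..u} (\<lambda>s. gts s t0)) has_real_derivative gts s0 t0) (at s0)"
    using integral_has_vector_derivative[OF cs, of s0] int interior_subset[of "{a..b}"]
    by (auto simp: has_real_derivative_iff_has_vector_derivative at_within_interior[OF int])
  have D1': "((\<lambda>u. gt u t0 - gt a t0) has_real_derivative gts s0 t0) (at s0)"
  proof (rule has_field_derivative_transform_within_open[OF D1, of "{a<..<b}"])
    show "s0 \<in> {a<..<b}" by (simp add: a_def b_def)
    show "\<And>x. x \<in> {a<..<b} \<Longrightarrow> integral {a..x} (\<lambda>s. gts s t0) = gt x t0 - gt a t0"
      using K by auto
  qed simp
  have D2: "((\<lambda>u. gt u t0 - gt a t0) has_real_derivative gst s0 t0) (at s0)"
    using DERIV_diff[OF gst[where t=t0 and s=s0] DERIV_const[where k="gt a t0"]] by simp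
  show ?thesis using DERIV_unique[OF D1' D2] .
qed

lemma chain_s:
  fixes c :: "real \<Rightarrow> real \<Rightarrow> real \<times> real" and F :: "(real \<times> real) \<times> real \<Rightarrow> 'b::real_normed_vector"
  assumes c: "((\<lambda>(s,t). c s t) has_derivative C) (at (s,t))"
  and F: "(F has_derivative Fd) (at (c s t, t))"
  shows "((\<lambda>s. F (c s t, t)) has_derivative (\<lambda>h. Fd (C (h,0), 0))) (at s)"
proof -
  have "((\<lambda>s. (s,t)) has_derivative (\<lambda>h. (h,0))) (at s)"
    by (auto intro!: derivative_eq_intros simp: zero_prod_def)
  from has_derivative_compose[OF this c]
  have "((\<lambda>s. c s t) has_derivative (\<lambda>h. C (h,0))) (at s)" by (simp only: prod.case)
  then have "((\<lambda>s. (c s t, t)) has_derivative (\<lambda>h. (C (h,0), 0))) (at s)"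
    by (auto intro!: derivative_eq_intros)
  then show ?thesis by (rule has_derivative_compose[of "\<lambda>s. (c s t, t)" "\<lambda>h. (C (h,0), 0)" s UNIV F Fd, OF _ F])
qed

lemma chain_t:
  fixes c :: "real \<Rightarrow> real \<Rightarrow> real \<times> real" and F :: "(real \<times> real) \<times> real \<Rightarrow> 'b::real_normed_vector"
  assumes c: "((\<lambda>(s,t). c s t) has_derivative C) (at (s,t))"
  and F: "(F has_derivative Fd) (at (c s t, t))"
  shows "((\<lambda>t. F (c s t, t)) has_derivative (\<lambda>h. Fd (C (0,h), h))) (at t)"
proof -
  have "((\<lambda>t. (s,t)) has_derivative (\<lambda>h. (0,h))) (at t)"
    by (auto intro!: derivative_eq_intros simp: zero_prod_def)
  from has_derivative_compose[OF this c]
  have "((\<lambda>t. c s t) has_derivative (\<lambda>h. C (0,h))) (at t)" by (simp only: prod.case)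
  then have "((\<lambda>t. (c s t, t)) has_derivative (\<lambda>h. (C (0,h), h))) (at t)"
    by (auto intro!: derivative_eq_intros)
  then show ?thesis by (rule has_derivative_compose[of "\<lambda>t. (c s t, t)" "\<lambda>h. (C (0,h), h)" t UNIV F Fd, OF _ F])
qed

lemma lin_pair:
  fixes Fd :: "(real \<times> real) \<times> real \<Rightarrow> 'b::real_normed_vector" and C :: "real \<times> real \<Rightarrow> real \<times> real"
  assumes "bounded_linear Fd" "bounded_linear C"
  shows "Fd (C (h,0), 0) = h *\<^sub>R Fd (C (1,0), 0)" "Fd (C (0,h), h) = h *\<^sub>R Fd (C (0,1), 1)"
proof -
  have "(h,0) = h *\<^sub>R (1::real,0::real)" "(0,h) = h *\<^sub>R (0::real,1::real)" by simp_all
  then have e: "C (h,0) = h *\<^sub>R C (1,0)" "C (0,h) = h *\<^sub>R C (0,1)"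
    by (metis linear_simps(5)[OF assms(2)])+
  have "(C (h,0), 0::real) = h *\<^sub>R (C (1,0), 0)" "(C (0,h), h) = h *\<^sub>R (C (0,1), 1::real)"
    unfolding e by simp_all
  then show "Fd (C (h,0), 0) = h *\<^sub>R Fd (C (1,0), 0)" "Fd (C (0,h), h) = h *\<^sub>R Fd (C (0,1), 1)"
    by (metis linear_simps(5)[OF assms(1)])+
qed

lemma chain_s_real:
  fixes c :: "real \<Rightarrow> real \<Rightarrow> real \<times> real" and F :: "(real \<times> real) \<times> real \<Rightarrow> real"
  assumes c: "((\<lambda>(s,t). c s t) has_derivative C) (at (s,t))"
  and F: "(F has_derivative Fd) (at (c s t, t))"
  shows "((\<lambda>s. F (c s t, t)) has_real_derivative Fd (C (1,0), 0)) (at s)"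
  by (rule has_derivative_imp_has_field_derivative[OF chain_s[OF c F]])
     (metis lin_pair(1)[OF has_derivative_bounded_linear[OF F] has_derivative_bounded_linear[OF c]] real_scaleR_def)

lemma chain_t_real:
  fixes c :: "real \<Rightarrow> real \<Rightarrow> real \<times> real" and F :: "(real \<times> real) \<times> real \<Rightarrow> real"
  assumes c: "((\<lambda>(s,t). c s t) has_derivative C) (at (s,t))"
  and F: "(F has_derivative Fd) (at (c s t, t))"
  shows "((\<lambda>t. F (c s t, t)) has_real_derivative Fd (C (0,1), 1)) (at t)"
  by (rule has_derivative_imp_has_field_derivative[OF chain_t[OF c F]])
     (metis lin_pair(2)[OF has_derivative_bounded_linear[OF F] has_derivative_bounded_linear[OF c]] real_scaleR_def)

lemma c_vd:
  fixes c :: "real \<Rightarrow> real \<Rightarrow> real \<times> real"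
  assumes c: "((\<lambda>(s,t). c s t) has_derivative C) (at (s,t))"
  shows "((\<lambda>s. c s t) has_vector_derivative C (1,0)) (at s)"
        "((\<lambda>t. c s t) has_vector_derivative C (0,1)) (at t)"
proof -
  have bl: "bounded_linear C" using has_derivative_bounded_linear[OF c] .
  have e: "C (h,0) = h *\<^sub>R C (1,0)" "C (0,h) = h *\<^sub>R C (0,1)" for h
  proof -
    have "(h,0) = h *\<^sub>R (1::real,0::real)" "(0,h) = h *\<^sub>R (0::real,1::real)" by simp_all
    then show "C (h,0) = h *\<^sub>R C (1,0)" "C (0,h) = h *\<^sub>R C (0,1)"
      by (metis linear_simps(5)[OF bl])+
  qed
  have "((\<lambda>s. (s,t)) has_derivative (\<lambda>h. (h,0))) (at s)"
    by (auto intro!: derivative_eq_intros simp: zero_prod_def)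
  from has_derivative_compose[OF this c]
  have "((\<lambda>s. c s t) has_derivative (\<lambda>h. C (h,0))) (at s)" by (simp only: prod.case)
  then show "((\<lambda>s. c s t) has_vector_derivative C (1,0)) (at s)"
    unfolding has_vector_derivative_def by (rule has_derivative_eq_rhs) (rule ext, rule e(1))
  have "((\<lambda>t. (s,t)) has_derivative (\<lambda>h. (0,h))) (at t)"
    by (auto intro!: derivative_eq_intros simp: zero_prod_def)
  from has_derivative_compose[OF this c]
  have "((\<lambda>t. c s t) has_derivative (\<lambda>h. C (0,h))) (at t)" by (simp only: prod.case)
  then show "((\<lambda>t. c s t) has_vector_derivative C (0,1)) (at t)"
    unfolding has_vector_derivative_def by (rule has_derivative_eq_rhs) (rule ext, rule e(2))
qed



lemma slice_x:
  fixes G :: "(real \<times> real) \<times> real \<Rightarrow> 'b::real_normed_vector"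
  assumes "(G has_derivative G') (at ((x,y),t))"
  shows "((\<lambda>x. G ((x,y),t)) has_derivative (\<lambda>h. G' ((h,0),0))) (at x)"
proof -
  have "((\<lambda>x. ((x,y),t)) has_derivative (\<lambda>h. ((h,0),0))) (at x)"
    by (auto intro!: derivative_eq_intros simp: zero_prod_def)
  then show ?thesis by (rule has_derivative_compose[of "\<lambda>x. ((x,y),t)" "\<lambda>h. ((h,0),0)" x UNIV G G', OF _ assms])
qed

lemma slice_y:
  fixes G :: "(real \<times> real) \<times> real \<Rightarrow> 'b::real_normed_vector"
  assumes "(G has_derivative G') (at ((x,y),t))"
  shows "((\<lambda>y. G ((x,y),t)) has_derivative (\<lambda>h. G' ((0,h),0))) (at y)"
proof -
  have "((\<lambda>y. ((x,y),t)) has_derivative (\<lambda>h. ((0,h),0))) (at y)"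
    by (auto intro!: derivative_eq_intros simp: zero_prod_def)
  then show ?thesis by (rule has_derivative_compose[of "\<lambda>y. ((x,y),t)" "\<lambda>h. ((0,h),0)" y UNIV G G', OF _ assms])
qed

lemma pd_slice_diff:
  fixes f :: "real \<times> real \<Rightarrow> real \<Rightarrow> real"
  assumes f1: "\<And>p. ((\<lambda>(r,t). f r t) has_derivative blinfun_apply (f1 p)) (at p)"
    and f2: "\<And>p. (f1 has_derivative F2 p) (at p)"
  shows "\<exists>a. ((\<lambda>x'. pdx f (x',y) t) has_real_derivative a) (at x)"
    "\<exists>b. ((\<lambda>y'. pdy f (x,y') t) has_real_derivative b) (at y)"
proof -
  have ex: "\<And>x'. pdx f (x',y) t = f1 ((x',y),t) ((1,0),0)"
    using pd_frechet(1)[OF f1] by simp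
  have ey: "\<And>y'. pdy f (x,y') t = f1 ((x,y'),t) ((0,1),0)"
    using pd_frechet(2)[OF f1] by simp
  have bl: "bounded_linear (\<lambda>B::((real\<times>real)\<times>real) \<Rightarrow>\<^sub>L real. blinfun_apply B e)" for e
    by (rule blinfun.bounded_linear_left)
  have "((\<lambda>x'. f1 ((x',y),t) ((1,0),0)) has_derivative (\<lambda>h. F2 ((x,y),t) ((h,0),0) ((1,0),0))) (at x)"
    using bounded_linear.has_derivative[OF bl slice_x[OF f2]] .
  then have "(\<lambda>x'. pdx f (x',y) t) differentiable (at x)"
    unfolding ex differentiable_def by blast
  then show "\<exists>a. ((\<lambda>x'. pdx f (x',y) t) has_real_derivative a) (at x)"
    by (simp add: real_differentiable_def)
  have "((\<lambda>y'. f1 ((x,y'),t) ((0,1),0)) has_derivative (\<lambda>h. F2 ((x,y),t) ((0,h),0) ((0,1),0))) (at y)"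
    using bounded_linear.has_derivative[OF bl slice_y[OF f2]] .
  then have "(\<lambda>y'. pdy f (x,y') t) differentiable (at y)"
    unfolding ey differentiable_def by blast
  then show "\<exists>b. ((\<lambda>y'. pdy f (x,y') t) has_real_derivative b) (at y)"
    by (simp add: real_differentiable_def)
qed

lemma hdiv_scale:
  fixes u :: "real \<times> real \<Rightarrow> real \<Rightarrow> real \<times> real"
  assumes "((\<lambda>x. fst (u (x, snd r) t)) has_real_derivative a) (at (fst r))"
    "((\<lambda>y. snd (u (fst r, y) t)) has_real_derivative b) (at (snd r))"
  shows "hdiv (\<lambda>r t. k *\<^sub>R u r t) r t = k * hdiv u r t"
proof -
  have "deriv (\<lambda>x. k * fst (u (x, snd r) t)) (fst r) = k * a"
    using DERIV_cmult[OF assms(1), of k] by (rule DERIV_imp_deriv)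
  moreover have "deriv (\<lambda>y. k * snd (u (fst r, y) t)) (snd r) = k * b"
    using DERIV_cmult[OF assms(2), of k] by (rule DERIV_imp_deriv)
  moreover have "deriv (\<lambda>x. fst (u (x, snd r) t)) (fst r) = a" using assms(1) by (rule DERIV_imp_deriv)
  moreover have "deriv (\<lambda>y. snd (u (fst r, y) t)) (snd r) = b" using assms(2) by (rule DERIV_imp_deriv)
  ultimately show ?thesis unfolding hdiv_def pdx_def pdy_def by (simp add: algebra_simps)
qed

lemma hdiv_prod:
  fixes u :: "real \<times> real \<Rightarrow> real \<Rightarrow> real \<times> real" and f :: "real \<times> real \<Rightarrow> real \<Rightarrow> real"
  assumes ua: "((\<lambda>x. fst (u (x, snd r) t)) has_real_derivative a) (at (fst r))"
    and ub: "((\<lambda>y. snd (u (fst r, y) t)) has_real_derivative b) (at (snd r))"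
    and fa: "((\<lambda>x. f (x, snd r) t) has_real_derivative fa) (at (fst r))"
    and fb: "((\<lambda>y. f (fst r, y) t) has_real_derivative fb) (at (snd r))"
  shows "hdiv (\<lambda>r t. f r t *\<^sub>R u r t) r t = fa * fst (u r t) + fb * snd (u r t) + f r t * (a + b)"
    "hdiv u r t = a + b"
proof -
  have "deriv (\<lambda>x. f (x, snd r) t * fst (u (x, snd r) t)) (fst r) = fa * fst (u (fst r, snd r) t) + a * f (fst r, snd r) t"
    using DERIV_mult[OF fa ua] by (rule DERIV_imp_deriv)
  moreover have "deriv (\<lambda>y. f (fst r, y) t * snd (u (fst r, y) t)) (snd r) = fb * snd (u (fst r, snd r) t) + b * f (fst r, snd r) t"
    using DERIV_mult[OF fb ub] by (rule DERIV_imp_deriv)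
  moreover have "deriv (\<lambda>x. fst (u (x, snd r) t)) (fst r) = a" using ua by (rule DERIV_imp_deriv)
  moreover have "deriv (\<lambda>y. snd (u (fst r, y) t)) (snd r) = b" using ub by (rule DERIV_imp_deriv)
  ultimately show "hdiv (\<lambda>r t. f r t *\<^sub>R u r t) r t = fa * fst (u r t) + fb * snd (u r t) + f r t * (a + b)"
    "hdiv u r t = a + b"
    unfolding hdiv_def pdx_def pdy_def by (simp_all add: algebra_simps)
qed

lemma cont_app2:
  fixes f :: "'a::topological_space \<Rightarrow> 'b::topological_space \<Rightarrow> 'c::topological_space"
  assumes "continuous_on UNIV (\<lambda>p. f (fst p) (snd p))" "continuous_on S a" "continuous_on S b"
  shows "continuous_on S (\<lambda>x. f (a x) (b x))"
proof -
  have "continuous_on S (\<lambda>x. (a x, b x))" by (intro continuous_intros assms(2,3))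
  from continuous_on_compose2[OF assms(1) this subset_UNIV] show ?thesis by simp
qed

lemma cont_app1:
  assumes "continuous_on UNIV f" "continuous_on S a"
  shows "continuous_on S (\<lambda>x. f (a x))"
  using continuous_on_compose2[OF assms(1) assms(2) subset_UNIV] .

lemma cont_slice:
  fixes f :: "real \<Rightarrow> real \<Rightarrow> 'c::topological_space"
  assumes "continuous_on UNIV (\<lambda>(t,s). f s t)"
  shows "continuous_on S (\<lambda>s. f s t)"
proof -
  have "continuous_on UNIV (\<lambda>s. (\<lambda>(t,s). f s t) (t, s))"
    by (rule cont_app1[OF assms]) (intro continuous_intros)
  then show ?thesis by simp (meson continuous_on_subset subset_UNIV)
qed



lemma field_cont:
  fixes f :: "'a::real_normed_vector \<Rightarrow> 'b::real_normed_vector \<Rightarrow> 'c::real_normed_vector"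
  assumes "\<And>p. ((\<lambda>(r,t). f r t) has_derivative F p) (at p)"
  shows "continuous_on UNIV (\<lambda>p. f (fst p) (snd p))"
proof -
  have "continuous_on UNIV (\<lambda>(r,t). f r t)"
    by (rule has_derivative_continuous_on) (simp, rule assms)
  then show ?thesis by (simp add: case_prod_beta')
qed

lemma deriv_cont:
  assumes "\<And>p. (f has_derivative F p) (at p)"
  shows "continuous_on UNIV f"
  by (rule has_derivative_continuous_on) (simp, rule assms)

lemma C2E:
  fixes f :: "'a::real_normed_vector \<Rightarrow> 'b::real_normed_vector"
  assumes "C2 f"
  obtains f1 f2 where "\<And>p. (f has_derivative blinfun_apply (f1 p)) (at p)"
    "\<And>p. (f1 has_derivative blinfun_apply (f2 p)) (at p)" "continuous_on UNIV f2" "continuous_on UNIV f1"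
proof -
  from assms obtain f1 where f1: "\<And>p. (f has_derivative blinfun_apply (f1 p)) (at p)" "C1 f1"
    unfolding C2_def by blast
  from f1(2) obtain f2 where f2: "\<And>p. (f1 has_derivative blinfun_apply (f2 p)) (at p)" "continuous_on UNIV f2"
    unfolding C1_def by blast
  show ?thesis using that[OF f1(1) f2] deriv_cont[OF f2(1)] by blast
qed



lemma inner_pair2: "inner u (p, q) = fst u * p + snd u * (q::real)"
  by (cases u) (simp add: inner_Pair)

lemma PDE_lemma:
  fixes v :: "real \<times> real \<Rightarrow> real \<Rightarrow> real \<times> real"
    and w D zeta lam :: "real \<times> real \<Rightarrow> real \<Rightarrow> real"
    and \<sigma> Fr \<epsilon> :: real
  assumes sigma_pos: "\<sigma> > 0" and Fr_pos: "Fr > 0"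
    and l1: "\<And>p. ((\<lambda>(r, t). lam r t) has_derivative blinfun_apply (l1 p)) (at p)"
    and d1: "\<And>p. ((\<lambda>(r, t). D r t) has_derivative blinfun_apply (d1 p)) (at p)"
    and w1: "\<And>p. ((\<lambda>(r, t). w r t) has_derivative blinfun_apply (w1 p)) (at p)"
    and z1: "\<And>p. ((\<lambda>(r, t). zeta r t) has_derivative blinfun_apply (z1 p)) (at p)"
    and z2: "\<And>p. (z1 has_derivative blinfun_apply (z2 p)) (at p)"
    and v1: "\<And>p. ((\<lambda>(r, t). v r t) has_derivative blinfun_apply (v1 p)) (at p)"
    and Dne: "D r t \<noteq> 0"
    and eq_lam_t: "pdt lam r t + hdiv (\<lambda>r t. lam r t *\<^sub>R v r t) r t
                     = - D r t / (\<sigma>\<^sup>2 * Fr\<^sup>2)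
                       - hdiv (\<lambda>r t. (\<epsilon> * \<sigma>\<^sup>2 * D r t * (w r t)\<^sup>2) *\<^sub>R grad zeta r t) r t"
    and eq_D: "pdt D r t + hdiv (\<lambda>r t. D r t *\<^sub>R v r t) r t = 0"
  shows "(l1 (r,t) (v r t, 1) * D r t - lam r t * d1 (r,t) (v r t, 1)) / (D r t * D r t)
     = - 1 / (\<sigma>\<^sup>2 * Fr\<^sup>2) - \<epsilon> * \<sigma>\<^sup>2 * (1 / D r t * hdiv (\<lambda>r t. (D r t * (w r t)\<^sup>2) *\<^sub>R grad zeta r t) r t)"
proof -
  have vx1: "((\<lambda>(r,t). fst (v r t)) has_derivative (\<lambda>h. fst (v1 p h))) (at p)" for p
    using has_derivative_fst[OF v1[of p]] unfolding case_prod_beta' by simp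
  have vx2: "((\<lambda>(r,t). snd (v r t)) has_derivative (\<lambda>h. snd (v1 p h))) (at p)" for p
    using has_derivative_snd[OF v1[of p]] unfolding case_prod_beta' by simp
  have ua: "((\<lambda>x. fst (v (x, snd r) t)) has_real_derivative fst (v1 (r,t) ((1,0),0))) (at (fst r))"
    using pd_frechet(4)[OF vx1] by simp
  have ub: "((\<lambda>y. snd (v (fst r, y) t)) has_real_derivative snd (v1 (r,t) ((0,1),0))) (at (snd r))"
    using pd_frechet(5)[OF vx2] by simp
  have lx: "((\<lambda>x. lam (x, snd r) t) has_real_derivative pdx lam r t) (at (fst r))"
    using pd_frechet(4)[OF l1[of "(r,t)"]] unfolding pd_frechet(1)[OF l1[of "(r,t)"], symmetric] .
  have ly: "((\<lambda>y. lam (fst r, y) t) has_real_derivative pdy lam r t) (at (snd r))"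
    using pd_frechet(5)[OF l1[of "(r,t)"]] unfolding pd_frechet(2)[OF l1[of "(r,t)"], symmetric] .
  have dx: "((\<lambda>x. D (x, snd r) t) has_real_derivative pdx D r t) (at (fst r))"
    using pd_frechet(4)[OF d1[of "(r,t)"]] unfolding pd_frechet(1)[OF d1[of "(r,t)"], symmetric] .
  have dy: "((\<lambda>y. D (fst r, y) t) has_real_derivative pdy D r t) (at (snd r))"
    using pd_frechet(5)[OF d1[of "(r,t)"]] unfolding pd_frechet(2)[OF d1[of "(r,t)"], symmetric] .
  define a where "a = fst (v1 (r,t) ((1,0),0))"
  define b where "b = snd (v1 (r,t) ((0,1),0))"
  have HL: "hdiv (\<lambda>r t. lam r t *\<^sub>R v r t) r t = pdx lam r t * fst (v r t) + pdy lam r t * snd (v r t) + lam r t * (a + b)"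
    using hdiv_prod(1)[where u=v and f=lam and r=r and t=t, OF ua ub lx ly] unfolding a_def b_def .
  have HD: "hdiv (\<lambda>r t. D r t *\<^sub>R v r t) r t = pdx D r t * fst (v r t) + pdy D r t * snd (v r t) + D r t * (a + b)"
    using hdiv_prod(1)[where u=v and f=D and r=r and t=t, OF ua ub dx dy] unfolding a_def b_def .
  obtain za where za: "((\<lambda>x'. pdx zeta (x', snd r) t) has_real_derivative za) (at (fst r))"
    using pd_slice_diff(1)[OF z1 z2] by blast
  obtain zb where zb: "((\<lambda>y'. pdy zeta (fst r, y') t) has_real_derivative zb) (at (snd r))"
    using pd_slice_diff(2)[OF z1 z2] by blast
  have wx: "((\<lambda>x. w (x, snd r) t) has_real_derivative pdx w r t) (at (fst r))"
    using pd_frechet(4)[OF w1[of "(r,t)"]] unfolding pd_frechet(1)[OF w1[of "(r,t)"], symmetric] .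
  have wy: "((\<lambda>y. w (fst r, y) t) has_real_derivative pdy w r t) (at (snd r))"
    using pd_frechet(5)[OF w1[of "(r,t)"]] unfolding pd_frechet(2)[OF w1[of "(r,t)"], symmetric] .
  define U where "U = (\<lambda>r t. (D r t * (w r t)\<^sup>2) *\<^sub>R grad zeta r t)"
  have U1: "((\<lambda>x. fst (U (x, snd r) t)) has_real_derivative
      (pdx D r t * (w (fst r, snd r) t)\<^sup>2 + of_nat 2 * (pdx w r t * (w (fst r, snd r) t) ^ (2 - Suc 0)) * D (fst r, snd r) t) * pdx zeta (fst r, snd r) t
      + za * (D (fst r, snd r) t * (w (fst r, snd r) t)\<^sup>2)) (at (fst r))"
    unfolding U_def grad_def fst_scaleR fst_conv real_scaleR_def
    by (intro DERIV_mult DERIV_power dx wx za)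
  have U2: "((\<lambda>y. snd (U (fst r, y) t)) has_real_derivative
      (pdy D r t * (w (fst r, snd r) t)\<^sup>2 + of_nat 2 * (pdy w r t * (w (fst r, snd r) t) ^ (2 - Suc 0)) * D (fst r, snd r) t) * pdy zeta (fst r, snd r) t
      + zb * (D (fst r, snd r) t * (w (fst r, snd r) t)\<^sup>2)) (at (snd r))"
    unfolding U_def grad_def snd_scaleR snd_conv real_scaleR_def
    by (intro DERIV_mult DERIV_power dy wy zb)
  have Ufun: "(\<lambda>r t. (\<epsilon> * \<sigma>\<^sup>2 * D r t * (w r t)\<^sup>2) *\<^sub>R grad zeta r t) = (\<lambda>r t. (\<epsilon> * \<sigma>\<^sup>2) *\<^sub>R U r t)"
    unfolding U_def by (simp add: fun_eq_iff mult.assoc)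
  have HE: "hdiv (\<lambda>r t. (\<epsilon> * \<sigma>\<^sup>2 * D r t * (w r t)\<^sup>2) *\<^sub>R grad zeta r t) r t = \<epsilon> * \<sigma>\<^sup>2 * hdiv U r t"
    unfolding Ufun by (rule hdiv_scale[where u=U and r=r and t=t, OF U1 U2])
  have MatL: "l1 (r,t) (v r t, 1) = pdx lam r t * fst (v r t) + pdy lam r t * snd (v r t) + pdt lam r t"
    using frechet_grad[OF l1[of "(r,t)"], of "v r t" 1] by (simp add: grad_def inner_pair2 algebra_simps)
  have MatD: "d1 (r,t) (v r t, 1) = pdx D r t * fst (v r t) + pdy D r t * snd (v r t) + pdt D r t"
    using frechet_grad[OF d1[of "(r,t)"], of "v r t" 1] by (simp add: grad_def inner_pair2 algebra_simps)
  define X where "X = l1 (r,t) (v r t, 1)"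
  define Y where "Y = d1 (r,t) (v r t, 1)"
  have EX: "X = - D r t / (\<sigma>\<^sup>2 * Fr\<^sup>2) - \<epsilon> * \<sigma>\<^sup>2 * hdiv U r t - lam r t * (a + b)"
    using eq_lam_t unfolding HE HL X_def MatL by simp
  have EY: "Y = - D r t * (a + b)"
    using eq_D unfolding HD Y_def MatD by simp
  have num: "X * D r t - lam r t * Y = (- D r t / (\<sigma>\<^sup>2 * Fr\<^sup>2) - \<epsilon> * \<sigma>\<^sup>2 * hdiv U r t) * D r t"
    unfolding EX EY by (simp add: algebra_simps)
  have "(X * D r t - lam r t * Y) / (D r t * D r t) = - 1 / (\<sigma>\<^sup>2 * Fr\<^sup>2) - \<epsilon> * \<sigma>\<^sup>2 * (1 / D r t * hdiv U r t)"
    unfolding num using Dne sigma_pos Fr_pos by (simp add: field_simps)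
  then show ?thesis unfolding X_def Y_def U_def .
qed



theorem mainTheorem2:
  fixes v :: "real \<times> real \<Rightarrow> real \<Rightarrow> real \<times> real"
    and w D phi zeta lam :: "real \<times> real \<Rightarrow> real \<Rightarrow> real"
    and c :: "real \<Rightarrow> real \<Rightarrow> real \<times> real"
    and \<sigma> Fr \<epsilon> :: real
  assumes sigma_pos: "\<sigma> > 0" and Fr_pos: "Fr > 0" and eps: "0 \<le> \<epsilon>" "\<epsilon> \<le> 1"
    and smooth: "C2 (\<lambda>(r, t). v r t)" "C2 (\<lambda>(r, t). w r t)" "C2 (\<lambda>(r, t). D r t)"
       "C2 (\<lambda>(r, t). phi r t)" "C2 (\<lambda>(r, t). zeta r t)" "C2 (\<lambda>(r, t). lam r t)"
    and D_pos: "\<And>r t. D r t > 0"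
    and eq_V: "\<And>r t. v r t + (\<sigma>\<^sup>2 * (lam r t / D r t)) *\<^sub>R grad zeta r t = grad phi r t"
    and eq_lam: "\<And>r t. lam r t / D r t = w r t * (1 + \<epsilon> * \<sigma>\<^sup>2 * (norm (grad zeta r t))\<^sup>2)"
    and eq_zeta: "\<And>r t. pdt zeta r t + inner (v r t) (grad zeta r t) - w r t = 0"
    and eq_lam_t: "\<And>r t. pdt lam r t + hdiv (\<lambda>r t. lam r t *\<^sub>R v r t) r t
                     = - D r t / (\<sigma>\<^sup>2 * Fr\<^sup>2)
                       - hdiv (\<lambda>r t. (\<epsilon> * \<sigma>\<^sup>2 * D r t * (w r t)\<^sup>2) *\<^sub>R grad zeta r t) r t"
    and eq_D: "\<And>r t. pdt D r t + hdiv (\<lambda>r t. D r t *\<^sub>R v r t) r t = 0"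
    and eq_phi: "\<And>r t. pdt phi r t + inner (v r t) (grad phi r t)
                   = (1/2) * ((norm (v r t))\<^sup>2 + \<sigma>\<^sup>2 * (w r t)\<^sup>2 * (1 + \<epsilon> * \<sigma>\<^sup>2 * (norm (grad zeta r t))\<^sup>2))
                     - zeta r t / Fr\<^sup>2"
    and loop_smooth: "C2 (\<lambda>(s, t). c s t)"
    and loop_closed: "\<And>t. c 0 t = c 1 t"
    and loop_material: "\<And>s t. ((\<lambda>\<tau>. c s \<tau>) has_vector_derivative v (c s t) t) (at t)"
  shows "\<And>t. ((\<lambda>t. circulation v c t) has_real_derivative
           \<epsilon> * \<sigma> ^ 4 * integral {0..1} (\<lambda>s.
              (1 / D (c s t) t) * hdiv (\<lambda>r t. (D r t * (w r t)\<^sup>2) *\<^sub>R grad zeta r t) (c s t) t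
                * deriv (\<lambda>s. zeta (c s t) t) s
              - (norm (grad zeta (c s t) t))\<^sup>2 * deriv (\<lambda>s. (w (c s t) t)\<^sup>2) s / 2)) (at t)"
proof -
  obtain z1 z2 where z1: "\<And>p. ((\<lambda>(r, t). zeta r t) has_derivative blinfun_apply (z1 p)) (at p)"
    and z2: "\<And>p. (z1 has_derivative blinfun_apply (z2 p)) (at p)"
    and z2c: "continuous_on UNIV z2" and z1c: "continuous_on UNIV z1"
    by (rule C2E[OF smooth(5)]) (rule that; assumption)
  obtain w1 w2 where w1: "\<And>p. ((\<lambda>(r, t). w r t) has_derivative blinfun_apply (w1 p)) (at p)"
    and w2: "\<And>p. (w1 has_derivative blinfun_apply (w2 p)) (at p)" and w1c: "continuous_on UNIV w1"
    by (rule C2E[OF smooth(2)]) (rule that; assumption)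
  obtain d1 d2 where d1: "\<And>p. ((\<lambda>(r, t). D r t) has_derivative blinfun_apply (d1 p)) (at p)"
    and d1c: "continuous_on UNIV d1"
    by (rule C2E[OF smooth(3)]) (rule that; assumption)
  obtain l1 l2 where l1: "\<And>p. ((\<lambda>(r, t). lam r t) has_derivative blinfun_apply (l1 p)) (at p)"
    and l1c: "continuous_on UNIV l1"
    by (rule C2E[OF smooth(6)]) (rule that; assumption)
  obtain p1 p2 where p1: "\<And>p. ((\<lambda>(r, t). phi r t) has_derivative blinfun_apply (p1 p)) (at p)"
    by (rule C2E[OF smooth(4)]) (rule that; assumption)
  obtain v1 v2 where v1: "\<And>p. ((\<lambda>(r, t). v r t) has_derivative blinfun_apply (v1 p)) (at p)"
    by (rule C2E[OF smooth(1)]) (rule that; assumption)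
  obtain c1 c2 where c1: "\<And>q. ((\<lambda>(s, t). c s t) has_derivative blinfun_apply (c1 q)) (at q)"
    and c2: "\<And>q. (c1 has_derivative blinfun_apply (c2 q)) (at q)"
    and c2c: "continuous_on UNIV c2" and c1c: "continuous_on UNIV c1"
    by (rule C2E[OF loop_smooth]) (rule that; assumption)
  have Dne: "\<And>r t. D r t \<noteq> 0" using D_pos by (metis less_irrefl)
  have cc: "continuous_on UNIV (\<lambda>p. c (fst p) (snd p))" by (rule field_cont[OF c1])
  have lc: "continuous_on UNIV (\<lambda>p. lam (fst p) (snd p))" by (rule field_cont[OF l1])
  have dc: "continuous_on UNIV (\<lambda>p. D (fst p) (snd p))" by (rule field_cont[OF d1])
  note [continuous_intros] = cont_app2[OF cc] cont_app2[OF lc] cont_app2[OF dc]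
    cont_app1[OF z1c] cont_app1[OF z2c] cont_app1[OF c1c] cont_app1[OF c2c] cont_app1[OF l1c] cont_app1[OF d1c]

  define cs where "cs s t = c1 (s,t) (1,0)" for s t
  define ct where "ct s t = c1 (s,t) (0,1)" for s t
  define Zs where "Zs s t = z1 (c s t, t) (cs s t, 0)" for s t
  define Zts where "Zts s t = z2 (c s t, t) (ct s t, 1) (cs s t, 0) + z1 (c s t, t) (c2 (s,t) (0,1) (1,0), 0)" for s t
  define W where "W s t = w (c s t) t" for s t
  define Ws where "Ws s t = w1 (c s t, t) (cs s t, 0)" for s t
  define Lf where "Lf s t = lam (c s t) t / D (c s t) t" for s t
  define Lt where "Lt s t = (l1 (c s t, t) (ct s t, 1) * D (c s t) t - lam (c s t) t * d1 (c s t, t) (ct s t, 1))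
      / (D (c s t) t * D (c s t) t)" for s t
  define H where "H t = integral {0..1} (\<lambda>s. Lf s t * Zs s t)" for t

  have ct_v: "ct s t = v (c s t) t" for s t
    unfolding ct_def using vector_derivative_unique_at[OF c_vd(2)[OF c1] loop_material] .
  have cs_vd: "((\<lambda>s. c s t) has_vector_derivative cs s t) (at s)" for s t
    unfolding cs_def by (rule c_vd(1)[OF c1])

  have F1: "((\<lambda>s. zeta (c s t) t) has_real_derivative Zs s t) (at s)" for s t
    using chain_s_real[OF c1 z1] unfolding Zs_def cs_def by (simp only: prod.case)
  have F2: "((\<lambda>t. zeta (c s t) t) has_real_derivative W s t) (at t)" for s t
  proof -
    have "((\<lambda>t. zeta (c s t) t) has_real_derivative z1 (c s t, t) (ct s t, 1)) (at t)"
      using chain_t_real[OF c1 z1] unfolding ct_def by (simp only: prod.case)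
    moreover have "z1 (c s t, t) (ct s t, 1) = W s t"
      using frechet_grad[OF z1, of "c s t" t "ct s t" 1] eq_zeta[of "c s t" t]
      unfolding ct_v W_def by (simp add: inner_commute)
    ultimately show ?thesis by simp
  qed
  have F4: "((\<lambda>s. W s t) has_real_derivative Ws s t) (at s)" for s t
    using chain_s_real[OF c1 w1] unfolding Ws_def W_def cs_def by (simp only: prod.case)
  have F3: "((\<lambda>t. Zs s t) has_real_derivative Zts s t) (at t)" for s t
  proof -
    have A: "((\<lambda>t. z1 (c s t, t)) has_derivative (\<lambda>h. z2 (c s t, t) (c1 (s,t) (0,h), h))) (at t)"
      using chain_t[OF c1 z2] .
    have "((\<lambda>t. (s,t)) has_derivative (\<lambda>h. (0,h))) (at t)"
      by (auto intro!: derivative_eq_intros simp: zero_prod_def)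
    from has_derivative_compose[OF this c2]
    have Cs: "((\<lambda>t. c1 (s,t)) has_derivative (\<lambda>h. c2 (s,t) (0,h))) (at t)" .
    have Cs1: "((\<lambda>t. c1 (s,t) (1,0)) has_derivative (\<lambda>h. c2 (s,t) (0,h) (1,0))) (at t)"
      by (rule bounded_linear.has_derivative[where f="\<lambda>a. blinfun_apply a (1,0)", OF blinfun.bounded_linear_left Cs])
    have B: "((\<lambda>t. (c1 (s,t) (1,0), 0::real)) has_derivative (\<lambda>h. (c2 (s,t) (0,h) (1,0), 0))) (at t)"
      by (rule has_derivative_Pair[OF Cs1 has_derivative_const])
    have AB: "((\<lambda>t. Zs s t) has_derivative (\<lambda>h. z1 (c s t, t) (c2 (s,t) (0,h) (1,0), 0) + z2 (c s t, t) (c1 (s,t) (0,h), h) (c1 (s,t) (1,0), 0))) (at t)"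
      unfolding Zs_def cs_def using blinfun.FDERIV[OF A B] .
    show ?thesis
    proof (rule has_derivative_imp_has_field_derivative[OF AB])
      fix h :: real
      have e1: "blinfun_apply (z2 (c s t, t)) (c1 (s,t) (0,h), h) = h *\<^sub>R blinfun_apply (z2 (c s t, t)) (c1 (s,t) (0,1), 1)"
        by (rule lin_pair(2)) (rule blinfun.bounded_linear_right)+
      have "(0::real, h) = h *\<^sub>R (0, 1)" by simp
      then have e2: "blinfun_apply (c2 (s,t)) (0,h) = h *\<^sub>R blinfun_apply (c2 (s,t)) (0,1)"
        by (metis blinfun.scaleR_right)
      have e3: "blinfun_apply (z1 (c s t, t)) (h *\<^sub>R y, 0) = h *\<^sub>R blinfun_apply (z1 (c s t, t)) (y, 0)" for y
      proof -
        have "(h *\<^sub>R y, 0::real) = h *\<^sub>R (y, 0)" by simp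
        then show ?thesis by (metis blinfun.scaleR_right)
      qed
      show "h * Zts s t = z1 (c s t, t) (c2 (s,t) (0,h) (1,0), 0) + z2 (c s t, t) (c1 (s,t) (0,h), h) (c1 (s,t) (1,0), 0)"
        unfolding Zts_def ct_def cs_def e1 e2 blinfun.scaleR_left e3 by (simp add: algebra_simps)
    qed
  qed
  have F5: "((\<lambda>t. Lf s t) has_real_derivative Lt s t) (at t)" for s t
  proof -
    have "((\<lambda>t. lam (c s t) t) has_real_derivative l1 (c s t, t) (ct s t, 1)) (at t)"
      using chain_t_real[OF c1 l1] unfolding ct_def by (simp only: prod.case)
    moreover have "((\<lambda>t. D (c s t) t) has_real_derivative d1 (c s t, t) (ct s t, 1)) (at t)"
      using chain_t_real[OF c1 d1] unfolding ct_def by (simp only: prod.case)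
    ultimately show ?thesis unfolding Lf_def Lt_def by (rule DERIV_divide) (rule Dne)
  qed
  have ContZts: "continuous_on UNIV (\<lambda>(t,s). Zts s t)"
    unfolding case_prod_beta' Zts_def cs_def ct_def
    by (intro continuous_intros)
  have ContH: "continuous_on UNIV (\<lambda>(t,s). Lt s t * Zs s t + Zts s t * Lf s t)"
    unfolding case_prod_beta' Zts_def cs_def ct_def Lt_def Lf_def Zs_def
    by (intro continuous_intros) (auto simp: Dne)
  have ContLZ: "continuous_on UNIV (\<lambda>(t,s). Lf s t * Zs s t)"
    unfolding case_prod_beta' cs_def Lf_def Zs_def
    by (intro continuous_intros) (auto simp: Dne)
  have sym: "Zts s t = Ws s t" for s t
    by (rule mixed_sym[where g="\<lambda>s t. zeta (c s t) t" and gs=Zs and gt=W and gts=Zts and gst=Ws,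
          OF F1 F2 F3 F4 ContZts])
  have HD: "(H has_real_derivative integral {0..1} (\<lambda>s. Lt s t * Zs s t + Zts s t * Lf s t)) (at t)" for t
  proof -
    have "((\<lambda>t. integral (cbox 0 1) (\<lambda>s. Lf s t * Zs s t)) has_real_derivative
        integral (cbox 0 1) (\<lambda>s. Lt s t * Zs s t + Zts s t * Lf s t)) (at t within UNIV)"
    proof (rule leibniz_rule_field_derivative[where f="\<lambda>t s. Lf s t * Zs s t"
          and fx="\<lambda>t s. Lt s t * Zs s t + Zts s t * Lf s t"])
      show "\<And>x s. x \<in> UNIV \<Longrightarrow> s \<in> cbox 0 1 \<Longrightarrow>
          ((\<lambda>x. Lf s x * Zs s x) has_real_derivative Lt s x * Zs s x + Zts s x * Lf s x) (at x within UNIV)"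
        using DERIV_mult[OF F5 F3] by simp
      show "\<And>x. x \<in> UNIV \<Longrightarrow> (\<lambda>s. Lf s x * Zs s x) integrable_on cbox 0 1"
        by (rule integrable_continuous) (rule cont_slice[OF ContLZ])
      show "continuous_on (UNIV \<times> cbox 0 1) (\<lambda>(x, s). Lt s x * Zs s x + Zts s x * Lf s x)"
        using ContH by (rule continuous_on_subset) simp
    qed auto
    then show ?thesis unfolding H_def by (simp add: cbox_interval)
  qed
  have circ: "circulation v c t' = (- (\<sigma>\<^sup>2)) * H t'" for t'
  proof -
    have vd: "vector_derivative (\<lambda>s. c s t') (at s) = cs s t'" for s
      using vector_derivative_at[OF cs_vd] .
    define Ps where "Ps s = p1 (c s t', t') (cs s t', 0)" for s
    have PsD: "((\<lambda>s. phi (c s t') t') has_real_derivative Ps s) (at s)" for s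
      using chain_s_real[OF c1 p1] unfolding Ps_def cs_def by (simp only: prod.case)
    have ptw: "inner (v (c s t') t') (vector_derivative (\<lambda>s. c s t') (at s)) = Ps s - \<sigma>\<^sup>2 * (Lf s t' * Zs s t')" for s
    proof -
      have ve: "v (c s t') t' = grad phi (c s t') t' - (\<sigma>\<^sup>2 * (lam (c s t') t' / D (c s t') t')) *\<^sub>R grad zeta (c s t') t'"
        using eq_V[of "c s t'" t'] by (metis add_diff_cancel_right')
      have pe: "Ps s = inner (cs s t') (grad phi (c s t') t')"
        using frechet_grad[OF p1, of "c s t'" t' "cs s t'" 0] unfolding Ps_def by simp
      have ze: "Zs s t' = inner (cs s t') (grad zeta (c s t') t')"
        using frechet_grad[OF z1, of "c s t'" t' "cs s t'" 0] unfolding Zs_def by simp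
      show ?thesis unfolding vd ve pe ze Lf_def
        by (simp add: inner_diff_left inner_commute algebra_simps)
    qed
    have int1: "(Ps has_integral 0) {0..1}"
      using ftc_at[of 0 1 "\<lambda>s. phi (c s t') t'" Ps] PsD loop_closed by simp
    have int2: "(\<lambda>s. Lf s t' * Zs s t') integrable_on {0..1}"
      by (rule integrable_continuous_real) (rule cont_slice[OF ContLZ])
    have "circulation v c t' = integral {0..1} (\<lambda>s. Ps s - \<sigma>\<^sup>2 * (Lf s t' * Zs s t'))"
      unfolding circulation_def ptw ..
    also have "\<dots> = integral {0..1} Ps - \<sigma>\<^sup>2 * H t'"
      using int1 int2 unfolding H_def
      by (subst integral_diff) (auto simp: has_integral_integrable intro: integrable_on_mult_right)
    also have "\<dots> = (- (\<sigma>\<^sup>2)) * H t'" using int1 by (simp add: integral_unique)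
    finally show ?thesis .
  qed
  show "\<And>t. ((\<lambda>t. circulation v c t) has_real_derivative
           \<epsilon> * \<sigma> ^ 4 * integral {0..1} (\<lambda>s.
              (1 / D (c s t) t) * hdiv (\<lambda>r t. (D r t * (w r t)\<^sup>2) *\<^sub>R grad zeta r t) (c s t) t
                * deriv (\<lambda>s. zeta (c s t) t) s
              - (norm (grad zeta (c s t) t))\<^sup>2 * deriv (\<lambda>s. (w (c s t) t)\<^sup>2) s / 2)) (at t)"
  proof -
    fix t
    define I0 where "I0 = integral {0..1} (\<lambda>s. Lt s t * Zs s t + Zts s t * Lf s t)"
    define B where "B s = 1 / D (c s t) t * hdiv (\<lambda>r t. (D r t * (w r t)\<^sup>2) *\<^sub>R grad zeta r t) (c s t) t" for s
    define G where "G s = (norm (grad zeta (c s t) t))\<^sup>2" for s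
    define T where "T s = 1 / D (c s t) t * hdiv (\<lambda>r t. (D r t * (w r t)\<^sup>2) *\<^sub>R grad zeta r t) (c s t) t
                * deriv (\<lambda>s. zeta (c s t) t) s
              - (norm (grad zeta (c s t) t))\<^sup>2 * deriv (\<lambda>s. (w (c s t) t)\<^sup>2) s / 2" for s
    have CD: "((\<lambda>t. circulation v c t) has_real_derivative (- (\<sigma>\<^sup>2)) * I0) (at t)"
      unfolding circ I0_def by (rule DERIV_cmult[OF HD])
    have dz: "deriv (\<lambda>s. zeta (c s t) t) s = Zs s t" for s
      using F1 by (rule DERIV_imp_deriv)
    have dw: "deriv (\<lambda>s. (w (c s t) t)\<^sup>2) s = 2 * W s t * Ws s t" for s
    proof -
      have "((\<lambda>s. (W s t)^2) has_real_derivative of_nat 2 * (Ws s t * (W s t) ^ (2 - Suc 0))) (at s)"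
        by (rule DERIV_power[OF F4])
      then show ?thesis unfolding W_def by (auto dest!: DERIV_imp_deriv)
    qed
    have Lte: "Lt s t = - 1 / (\<sigma>\<^sup>2 * Fr\<^sup>2) - \<epsilon> * \<sigma>\<^sup>2 * B s" for s
      unfolding Lt_def B_def ct_v
      by (rule PDE_lemma[OF sigma_pos Fr_pos l1 d1 w1 z1 z2 v1 Dne eq_lam_t eq_D])
    have Lfe: "Lf s t = W s t * (1 + \<epsilon> * \<sigma>\<^sup>2 * G s)" for s
      unfolding Lf_def W_def G_def by (rule eq_lam)
    have pt: "\<epsilon> * \<sigma>^4 * T s = (- (\<sigma>\<^sup>2)) * (Lt s t * Zs s t + Zts s t * Lf s t) - (1 / Fr\<^sup>2) * Zs s t + \<sigma>\<^sup>2 * (W s t * Ws s t)" for s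
    proof -
      have Te: "T s = B s * Zs s t - G s * (W s t * Ws s t)"
        unfolding T_def dz dw B_def G_def by simp
      show ?thesis unfolding Te sym Lte Lfe using sigma_pos Fr_pos
        by (simp add: field_simps power2_eq_square power4_eq_xxxx algebra_simps)
    qed
    have iZ: "((\<lambda>s. Zs s t) has_integral 0) {0..1}"
      using ftc_at[of 0 1 "\<lambda>s. zeta (c s t) t" "\<lambda>s. Zs s t"] F1 loop_closed by simp
    have iW: "((\<lambda>s. W s t * Ws s t) has_integral 0) {0..1}"
    proof -
      have "((\<lambda>s. (W s t)^2 / 2) has_real_derivative W s t * Ws s t) (at s)" for s
        using DERIV_divide[OF DERIV_power[OF F4, where n=2] DERIV_const[where k=2]] by (simp add: mult.commute)
      from ftc_at[of 0 1 "\<lambda>s. (W s t)^2 / 2", OF _ this] show ?thesis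
        unfolding W_def using loop_closed by simp
    qed
    have iM: "((\<lambda>s. (- (\<sigma>\<^sup>2)) * (Lt s t * Zs s t + Zts s t * Lf s t)) has_integral (- (\<sigma>\<^sup>2)) * I0) {0..1}"
    proof -
      have "(\<lambda>s. Lt s t * Zs s t + Zts s t * Lf s t) integrable_on {0..1}"
        by (rule integrable_continuous_real) (rule cont_slice[OF ContH])
      then show ?thesis unfolding I0_def by (intro has_integral_mult_right integrable_integral)
    qed
    have iT: "((\<lambda>s. \<epsilon> * \<sigma>^4 * T s) has_integral (- (\<sigma>\<^sup>2)) * I0) {0..1}"
    proof -
      have "((\<lambda>s. (- (\<sigma>\<^sup>2)) * (Lt s t * Zs s t + Zts s t * Lf s t) - (1 / Fr\<^sup>2) * Zs s t + \<sigma>\<^sup>2 * (W s t * Ws s t))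
          has_integral ((- (\<sigma>\<^sup>2)) * I0 - (1 / Fr\<^sup>2) * 0 + \<sigma>\<^sup>2 * 0)) {0..1}"
        by (intro has_integral_add has_integral_diff iM has_integral_mult_right iZ iW)
      then show ?thesis unfolding pt by simp
    qed
    have "(- (\<sigma>\<^sup>2)) * I0 = \<epsilon> * \<sigma> ^ 4 * integral {0..1} T"
    proof (cases "\<epsilon> = 0")
      case True
      then have "((\<lambda>s. 0) has_integral (- (\<sigma>\<^sup>2)) * I0) {0..1}" using iT by simp
      then have "(- (\<sigma>\<^sup>2)) * I0 = 0" using has_integral_unique[OF _ has_integral_0] by blast
      then show ?thesis using True by simp
    next
      case False
      then have ne: "\<epsilon> * \<sigma>^4 \<noteq> 0" using sigma_pos by simp
      have "((\<lambda>s. (1 / (\<epsilon> * \<sigma>^4)) * (\<epsilon> * \<sigma>^4 * T s)) has_integral (1 / (\<epsilon> * \<sigma>^4)) * ((- (\<sigma>\<^sup>2)) * I0)) {0..1}"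
        by (rule has_integral_mult_right[OF iT])
      then have "(T has_integral (1 / (\<epsilon> * \<sigma>^4)) * ((- (\<sigma>\<^sup>2)) * I0)) {0..1}"
        using ne by simp
      then have "integral {0..1} T = (1 / (\<epsilon> * \<sigma>^4)) * ((- (\<sigma>\<^sup>2)) * I0)" by (rule integral_unique)
      then show ?thesis using ne by simp
    qed
    then show "((\<lambda>t. circulation v c t) has_real_derivative
           \<epsilon> * \<sigma> ^ 4 * integral {0..1} (\<lambda>s.
              (1 / D (c s t) t) * hdiv (\<lambda>r t. (D r t * (w r t)\<^sup>2) *\<^sub>R grad zeta r t) (c s t) t
                * deriv (\<lambda>s. zeta (c s t) t) s
              - (norm (grad zeta (c s t) t))\<^sup>2 * deriv (\<lambda>s. (w (c s t) t)\<^sup>2) s / 2)) (at t)"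
      using CD unfolding T_def by simp
  qed
qed


end
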